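(* Let $H$ be a $k$-gate. If $H$ is an induced subgraph of a graph $G$, then $H$ is an induced subgraph of some atom of $G$.
   Context: All graphs are finite and simple. A clique is a maximal complete set of vertices. A clique $C$ of a connected graph $H$ is a separator if $H-C$ (the subgraph induced by $V(H)\setminus C$) is disconnected; an atom is a connected graph with no clique separator. The atoms of a graph $G$ are the graphs obtained by the decomposition of $G$ by clique separators: $G$ is progressively decomposed along clique separators into a clique decomposition tree whose leaves correspond to atoms; equivalently, the atoms of $G$ are the maximal connected induced subgraphs of $G$ having no clique separator. Gates are defined recursively: (i) every chordless cycle $C_n$ with $n\geq 4$ is a gate; (ii) if $H'$ is a gate, $C$ and $C'$ are disjoint cliques of $H'$, and $P=(v_1,\dots,v_l)$ with $l\geq 2$ is a chordless path vertex-disjoint from $H'$, then the union of $H'$ and $P$ together with all edges between $v_1$ and the vertices of $C$ and all edges between $v_l$ and the vertices of $C'$ is a gate; (iii) there are no other gates. A $k$-gate is a gate with exactly $k$ cliques. *)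

theory Defs
  imports Main
begin

type_synonym 'a graph = "'a set \<times> 'a set set"

definition graph :: "'a graph \<Rightarrow> bool" where
  "graph G \<longleftrightarrow> finite (fst G) \<and> (\<forall>e\<in>snd G. e \<subseteq> fst G \<and> card e = 2)"

definition induced :: "'a graph \<Rightarrow> 'a set \<Rightarrow> 'a graph" where
  "induced G S = (S, {e \<in> snd G. e \<subseteq> S})"

definition induced_subgraph :: "'a graph \<Rightarrow> 'a graph \<Rightarrow> bool" where
  "induced_subgraph H G \<longleftrightarrow> fst H \<subseteq> fst G \<and> snd H = {e \<in> snd G. e \<subseteq> fst H}"

definition complete_set :: "'a graph \<Rightarrow> 'a set \<Rightarrow> bool" where
  "complete_set G S \<longleftrightarrow> S \<subseteq> fst G \<and> (\<forall>u\<in>S. \<forall>v\<in>S. u \<noteq> v \<longrightarrow> {u, v} \<in> snd G)"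

definition clique :: "'a graph \<Rightarrow> 'a set \<Rightarrow> bool" where
  "clique G C \<longleftrightarrow> complete_set G C \<and> (\<forall>D. C \<subset> D \<longrightarrow> \<not> complete_set G D)"

definition connected_graph :: "'a graph \<Rightarrow> bool" where
  "connected_graph G \<longleftrightarrow> fst G \<noteq> {} \<and>
     (\<forall>u\<in>fst G. \<forall>v\<in>fst G. (u, v) \<in> {(x, y). {x, y} \<in> snd G}\<^sup>*)"

definition disconnected_graph :: "'a graph \<Rightarrow> bool" where
  "disconnected_graph G \<longleftrightarrow> fst G \<noteq> {} \<and> \<not> connected_graph G"

definition clique_separator :: "'a graph \<Rightarrow> 'a set \<Rightarrow> bool" where
  "clique_separator H C \<longleftrightarrow> clique H C \<and> disconnected_graph (induced H (fst H - C))"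

definition atom :: "'a graph \<Rightarrow> bool" where
  "atom H \<longleftrightarrow> connected_graph H \<and> \<not> (\<exists>C. clique_separator H C)"

definition atom_of :: "'a graph \<Rightarrow> 'a set \<Rightarrow> bool" where
  "atom_of G A \<longleftrightarrow> A \<subseteq> fst G \<and> atom (induced G A) \<and>
     (\<forall>B. A \<subset> B \<and> B \<subseteq> fst G \<longrightarrow> \<not> atom (induced G B))"

inductive gate :: "'a graph \<Rightarrow> bool" where
  cycle: "\<lbrakk> length xs \<ge> 4; distinct xs;
            E = {{xs ! i, xs ! ((i + 1) mod length xs)} | i. i < length xs} \<rbrakk>
          \<Longrightarrow> gate (set xs, E)"
| extend: "\<lbrakk> gate (V, E); clique (V, E) C; clique (V, E) C'; C \<inter> C' = {};
             distinct ps; length ps \<ge> 2; set ps \<inter> V = {};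
             E' = E \<union> {{ps ! i, ps ! (i + 1)} | i. i + 1 < length ps}
                    \<union> {{hd ps, c} | c. c \<in> C} \<union> {{last ps, c} | c. c \<in> C'} \<rbrakk>
          \<Longrightarrow> gate (V \<union> set ps, E')"

definition k_gate :: "nat \<Rightarrow> 'a graph \<Rightarrow> bool" where
  "k_gate k H \<longleftrightarrow> gate H \<and> card {C. clique H C} = k"

end

theory Submission
  imports Defs
begin


definition conn :: "'a set set \<Rightarrow> 'a set \<Rightarrow> bool" where
  "conn E S \<longleftrightarrow> connected_graph (S, {e\<in>E. e\<subseteq>S})"
definition R :: "'a set set \<Rightarrow> 'a set \<Rightarrow> ('a \<times> 'a) set" where
  "R E S = {(x,y). {x,y}\<in>E \<and> x\<in>S \<and> y\<in>S}"

lemma conn_def2: "conn E S \<longleftrightarrow> S \<noteq> {} \<and> (\<forall>u\<in>S. \<forall>v\<in>S. (u,v) \<in> (R E S)\<^sup>*)"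
  unfolding conn_def connected_graph_def R_def by simp

lemma R_sym: "(x,y) \<in> (R E S)\<^sup>* \<Longrightarrow> (y,x) \<in> (R E S)\<^sup>*"
proof -
  assume a: "(x,y) \<in> (R E S)\<^sup>*"
  have "sym (R E S)" unfolding R_def sym_def by (auto simp: insert_commute)
  hence "sym ((R E S)\<^sup>*)" by (rule sym_rtrancl)
  thus ?thesis using a by (meson symD)
qed

lemma conn_root: "r \<in> S \<Longrightarrow> (\<And>u. u\<in>S \<Longrightarrow> (r,u) \<in> (R E S)\<^sup>*) \<Longrightarrow> conn E S"
  unfolding conn_def2 by (meson R_sym empty_iff rtrancl_trans)

lemma R_mono: "E \<subseteq> E' \<Longrightarrow> S \<subseteq> S' \<Longrightarrow> (R E S)\<^sup>* \<subseteq> (R E' S')\<^sup>*"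
  by (rule rtrancl_mono) (auto simp: R_def)

lemma conn_mono: "conn E S \<Longrightarrow> E \<subseteq> E' \<Longrightarrow> conn E' S"
  unfolding conn_def2 using R_mono[of E E' S S] by blast

lemma conn_eq: "conn E S \<Longrightarrow> S = S' \<Longrightarrow> conn E S'" by simp

lemma conn_union_edge:
  assumes A: "conn E A" and B: "conn E B" and a: "a\<in>A" and b: "b\<in>B" and ab: "{a,b}\<in>E"
  shows "conn E (A\<union>B)"
proof (rule conn_root[of a])
  show "a \<in> A \<union> B" using a by simp
  fix u assume u: "u \<in> A \<union> B"
  show "(a,u) \<in> (R E (A\<union>B))\<^sup>*"
  proof (cases "u \<in> A")
    case True
    then have "(a,u) \<in> (R E A)\<^sup>*" using A a unfolding conn_def2 by blast
    then show ?thesis using R_mono[of E E A "A\<union>B"] by blast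
  next
    case False
    then have "u \<in> B" using u by simp
    then have "(b,u) \<in> (R E B)\<^sup>*" using B b unfolding conn_def2 by blast
    then have 1: "(b,u) \<in> (R E (A\<union>B))\<^sup>*" using R_mono[of E E B "A\<union>B"] by blast
    have "(a,b) \<in> R E (A\<union>B)" using a b ab by (simp add: R_def)
    then show ?thesis using 1 by (rule converse_rtrancl_into_rtrancl)
  qed
qed

lemma conn_union_opt:
  assumes A: "conn E A" and B: "B \<noteq> {} \<Longrightarrow> conn E B \<and> (\<exists>a\<in>A. \<exists>b\<in>B. {a,b}\<in>E)"
  shows "conn E (A\<union>B)"
proof (cases "B = {}")
  case True then show ?thesis using A by simp
next
  case False then show ?thesis using B A conn_union_edge by metis
qed

lemma conn_chain:
  assumes m: "0<m" and ch: "\<And>t. Suc t < m \<Longrightarrow> {f t, f (Suc t)} \<in> E"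
  shows "conn E (f ` {..<m})"
proof (rule conn_root[of "f 0"])
  show "f 0 \<in> f ` {..<m}" using m by simp
  have "\<forall>t. t < m \<longrightarrow> (f 0, f t) \<in> (R E (f ` {..<m}))\<^sup>*"
  proof
    fix t show "t < m \<longrightarrow> (f 0, f t) \<in> (R E (f ` {..<m}))\<^sup>*"
    proof (induction t)
      case 0 then show ?case by simp
    next
      case (Suc t)
      show ?case
      proof
        assume s: "Suc t < m"
        have "(f t, f (Suc t)) \<in> R E (f ` {..<m})" using ch[OF s] s by (auto simp: R_def)
        then show "(f 0, f (Suc t)) \<in> (R E (f ` {..<m}))\<^sup>*" using Suc s by (meson Suc_lessD rtrancl.rtrancl_into_rtrancl)
      qed
    qed
  qed
  then show "\<And>u. u \<in> f ` {..<m} \<Longrightarrow> (f 0, u) \<in> (R E (f ` {..<m}))\<^sup>*" by auto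
qed

definition ginv :: "'a set \<Rightarrow> 'a set set \<Rightarrow> bool" where
  "ginv V E \<longleftrightarrow> conn E V \<and> (\<forall>e\<in>E. e \<subseteq> V) \<and> (\<forall>K. clique (V,E) K \<longrightarrow> conn E (V - K))"

lemma modsmall: "(a::nat) < 2*n \<Longrightarrow> a mod n = (if a < n then a else a - n)"
  by (auto simp: le_mod_geq)



lemma cycle_inv:
  assumes n4: "4 \<le> length xs" and dist: "distinct xs"
    and E: "E = {{xs!i, xs!((i+1) mod length xs)} | i. i < length xs}"
  shows "ginv (set xs) E"
proof -
  define n where "n = length xs"
  have n0: "0 < n" "4 \<le> n" using n4 n_def by auto
  have md: "\<And>a. a < 2*n \<Longrightarrow> a mod n = (if a < n then a else a - n)" by (rule modsmall)
  have md1: "\<And>a. a < n \<Longrightarrow> (a+1) mod n = (if a+1 < n then a+1 else 0)"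
    using md by (simp add: n0(1))
  have Em: "\<And>x. x \<in> E \<longleftrightarrow> (\<exists>i<n. x = {xs!i, xs!((i+1) mod n)})" using E n_def by auto
  have adj: "{xs!a, xs!b} \<in> E \<longleftrightarrow> (b = (a+1) mod n \<or> a = (b+1) mod n)" if a: "a<n" and b: "b<n" for a b
  proof
    assume "{xs!a, xs!b} \<in> E"
    then obtain i where i: "i<n" "{xs!a, xs!b} = {xs!i, xs!((i+1) mod n)}" using Em by blast
    have i1: "(i+1) mod n < n" using n0 by simp
    from i(2) have "(xs!a = xs!i \<and> xs!b = xs!((i+1) mod n)) \<or> (xs!a = xs!((i+1) mod n) \<and> xs!b = xs!i)"
      by (auto simp: doubleton_eq_iff)
    then have "(a = i \<and> b = (i+1) mod n) \<or> (a = (i+1) mod n \<and> b = i)"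
      using nth_eq_iff_index_eq[OF dist] a b i(1) i1 n_def by metis
    then show "b = (a+1) mod n \<or> a = (b+1) mod n" by auto
  next
    assume "b = (a+1) mod n \<or> a = (b+1) mod n"
    then show "{xs!a, xs!b} \<in> E"
    proof
      assume "b = (a+1) mod n" then show ?thesis using Em a by blast
    next
      assume "a = (b+1) mod n" then show ?thesis using Em b by (auto simp: insert_commute)
    qed
  qed
  have setxs: "set xs = (\<lambda>t. xs!t) ` {..<n}" by (auto simp: set_conv_nth n_def)
  have esub: "\<forall>e\<in>E. e \<subseteq> set xs" using Em n0 n_def by auto
  have cV: "conn E (set xs)"
    unfolding setxs
  proof (rule conn_chain)
    show "0 < n" using n0 by simp
    fix t
    assume st: "Suc t < n"
    then have "(t+1) mod n = Suc t" by simp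
    then show "{xs!t, xs!(Suc t)} \<in> E" using Em[of "{xs!t, xs!(Suc t)}"] st by (metis Suc_lessD)
  qed
  have edge_complete: "complete_set (set xs, E) {xs!i, xs!((i+1) mod n)}" if i: "i<n" for i
    using i n0 Em unfolding complete_set_def by (auto simp: n_def insert_commute)
  have cliq: "\<exists>i<n. K = {xs!i, xs!((i+1) mod n)}" if K: "clique (set xs, E) K" for K
  proof -
    have Kc: "complete_set (set xs, E) K" and Km: "\<And>D. K \<subset> D \<Longrightarrow> \<not> complete_set (set xs, E) D"
      using K unfolding clique_def by auto
    have KV: "K \<subseteq> set xs" using Kc unfolding complete_set_def by simp
    have "K \<noteq> {}"
    proof
      assume "K = {}"
      moreover have "complete_set (set xs, E) {xs!0}" using n0 n_def unfolding complete_set_def by auto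
      ultimately show False using Km by blast
    qed
    then obtain x where x: "x \<in> K" by blast
    then obtain a where a: "a<n" "x = xs!a" using KV by (auto simp: setxs)
    have "\<exists>y\<in>K. y \<noteq> x"
    proof (rule ccontr)
      assume "\<not> ?thesis"
      then have "K = {x}" using x by blast
      moreover have "(a+1) mod n \<noteq> a" using md1[OF a(1)] n0 by auto
      then have "xs!((a+1) mod n) \<noteq> xs!a" using nth_eq_iff_index_eq[OF dist] a n0 n_def by simp
      ultimately have "K \<subset> {xs!a, xs!((a+1) mod n)}" using a by auto
      then show False using Km edge_complete[OF a(1)] by blast
    qed
    then obtain y where y: "y\<in>K" "y\<noteq>x" by blast
    then obtain b where b: "b<n" "y = xs!b" using KV by (auto simp: setxs)
    have xyE: "{x,y} \<in> E" using Kc x y unfolding complete_set_def by auto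
    then have ab: "b = (a+1) mod n \<or> a = (b+1) mod n" using adj a b by simp
    have tri: False if c: "c<n" "c \<noteq> a" "c \<noteq> b" "{xs!a, xs!c} \<in> E" "{xs!b, xs!c} \<in> E" for c
    proof -
      have "a \<noteq> b" using y a b by auto
      moreover have "c = (a+1) mod n \<or> a = (c+1) mod n" using adj a c by simp
      moreover have "c = (b+1) mod n \<or> b = (c+1) mod n" using adj b c by simp
      ultimately show False using ab md1[OF a(1)] md1[OF b(1)] md1[OF c(1)] c(2,3) n0
        by (auto split: if_splits)
    qed
    obtain i where i: "i<n" "{x,y} = {xs!i, xs!((i+1) mod n)}"
      using ab a b by (metis insert_commute)
    have "K \<subseteq> {x,y}"
    proof
      fix z assume z: "z \<in> K"
      show "z \<in> {x,y}"
      proof (rule ccontr)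
        assume nz: "z \<notin> {x,y}"
        obtain c where c: "c<n" "z = xs!c" using z KV by (auto simp: setxs)
        have "{x,z} \<in> E" "{y,z} \<in> E" using Kc x y z nz unfolding complete_set_def by auto
        then show False using tri[of c] c a b nz by auto
      qed
    qed
    then have "K = {x,y}" using Km edge_complete[OF i(1)] i(2) by blast
    then show ?thesis using i by blast
  qed
  have rest: "conn E (set xs - {xs!i, xs!((i+1) mod n)})" if i: "i<n" for i
  proof -
    have eq: "set xs - {xs!i, xs!((i+1) mod n)} = (\<lambda>t. xs!((i+2+t) mod n)) ` {..<n-2}"
    proof
      show "set xs - {xs!i, xs!((i+1) mod n)} \<subseteq> (\<lambda>t. xs!((i+2+t) mod n)) ` {..<n-2}"
      proof
        fix x assume x: "x \<in> set xs - {xs!i, xs!((i+1) mod n)}"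
        then obtain j where j: "j<n" "x = xs!j" by (auto simp: setxs)
        have "j \<noteq> i" "j \<noteq> (i+1) mod n" using x j by auto
        define t where "t = (if i+2 \<le> j then j-i-2 else j+n-i-2)"
        have "t < n-2" "(i+2+t) mod n = j" using md[of "i+2+t"] md1[OF i] \<open>j \<noteq> i\<close> \<open>j \<noteq> (i+1) mod n\<close> j i
          unfolding t_def by (auto split: if_splits)
        then show "x \<in> (\<lambda>t. xs!((i+2+t) mod n)) ` {..<n-2}" using j by force
      qed
    next
      show "(\<lambda>t. xs!((i+2+t) mod n)) ` {..<n-2} \<subseteq> set xs - {xs!i, xs!((i+1) mod n)}"
      proof
        fix x assume "x \<in> (\<lambda>t. xs!((i+2+t) mod n)) ` {..<n-2}"
        then obtain t where t: "t<n-2" "x = xs!((i+2+t) mod n)" by blast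
        have lt: "(i+2+t) mod n < n" using n0 by simp
        have "(i+2+t) mod n \<noteq> i" "(i+2+t) mod n \<noteq> (i+1) mod n"
          using md[of "i+2+t"] md1[OF i] t i by (auto split: if_splits)
        moreover have "(i+1) mod n < n" using n0 by simp
        ultimately show "x \<in> set xs - {xs!i, xs!((i+1) mod n)}"
          using t lt i nth_eq_iff_index_eq[OF dist] n_def by auto
      qed
    qed
    show ?thesis unfolding eq
    proof (rule conn_chain)
      show "0 < n-2" using n0 by simp
      fix t assume "Suc t < n-2"
      have "((i+2+t) mod n + 1) mod n = (i+2+Suc t) mod n" by (simp add: mod_Suc_eq)
      moreover have "(i+2+t) mod n < n" using n0 by simp
      ultimately show "{xs!((i+2+t) mod n), xs!((i+2+Suc t) mod n)} \<in> E"
        using Em by metis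
    qed
  qed
  show ?thesis unfolding ginv_def using cV esub cliq rest by blast
qed



lemma ext_inv:
  assumes IH: "ginv V E" and C: "clique (V,E) C" and C': "clique (V,E) C'" and disj: "C \<inter> C' = {}"
   and dps: "distinct ps" and l2: "2 \<le> length ps" and psV: "set ps \<inter> V = {}"
   and E': "E' = E \<union> {{ps!i, ps!(i+1)} | i. i+1 < length ps} \<union> {{hd ps, c} | c. c\<in>C} \<union> {{last ps, c} | c. c \<in> C'}"
  shows "ginv (V \<union> set ps) E'"
proof -
  define l where "l = length ps"
  have l2': "2 \<le> l" using l2 l_def by simp
  have hd: "hd ps = ps!0" using l2 by (cases ps) auto
  have lst: "last ps = ps!(l-1)" using l2 l_def by (metis last_conv_nth list.size(3) not_numeral_le_zero)
  have Em: "\<And>x. x \<in> E' \<longleftrightarrow> x \<in> E \<or> (\<exists>i. i+1<l \<and> x = {ps!i, ps!(i+1)}) \<or> (\<exists>c\<in>C. x = {ps!0, c}) \<or> (\<exists>c\<in>C'. x = {ps!(l-1), c})"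
    using E' hd lst l_def by auto
  have cV: "conn E V" and eV: "\<forall>e\<in>E. e \<subseteq> V" and cK: "\<And>K. clique (V,E) K \<Longrightarrow> conn E (V - K)"
    using IH unfolding ginv_def by auto
  have Vne: "V \<noteq> {}" using cV unfolding conn_def2 by simp
  have nth_inj: "\<And>i j. i<l \<Longrightarrow> j<l \<Longrightarrow> ps!i = ps!j \<longleftrightarrow> i = j" using dps l_def nth_eq_iff_index_eq by blast
  have setps: "set ps = (\<lambda>t. ps!t) ` {..<l}" by (auto simp: set_conv_nth l_def)
  have psnV: "\<And>i. i<l \<Longrightarrow> ps!i \<notin> V" using psV l_def nth_mem by fastforce
  have cliq_ne: "K \<noteq> {}" and cliq_sub: "K \<subseteq> V" if K: "clique (V,E) K" for K
  proof -
    show "K \<subseteq> V" using K unfolding clique_def complete_set_def by simp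
    show "K \<noteq> {}"
    proof
      assume "K = {}"
      obtain v where "v \<in> V" using Vne by blast
      then have "complete_set (V,E) {v}" unfolding complete_set_def by simp
      then show False using K \<open>K = {}\<close> unfolding clique_def by blast
    qed
  qed
  have CV: "C \<subseteq> V" "C' \<subseteq> V" "C \<noteq> {}" "C' \<noteq> {}" using cliq_ne cliq_sub C C' by auto
  have EE': "E \<subseteq> E'" using Em by blast
  have eVV: "\<And>x y. x\<in>V \<Longrightarrow> y\<in>V \<Longrightarrow> {x,y}\<in>E' \<longleftrightarrow> {x,y}\<in>E"
  proof -
    fix x y assume x: "x\<in>V" and y: "y\<in>V"
    have "\<And>i. i < l \<Longrightarrow> ps!i \<notin> {x,y}" using psnV x y by auto
    moreover have "0 < l" "l - 1 < l" using l2' by auto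
    ultimately show "{x,y}\<in>E' \<longleftrightarrow> {x,y}\<in>E" unfolding Em
      by (metis Suc_eq_plus1 Suc_lessD insertCI)
  qed
  have ePP: "{ps!a, ps!b}\<in>E' \<longleftrightarrow> b = a+1" if ab: "a<l" "b<l" "a<b" for a b
  proof
    assume "{ps!a, ps!b}\<in>E'"
    moreover have "{ps!a, ps!b} \<notin> E" using eV psnV ab by blast
    moreover have "\<And>c. c \<in> V \<Longrightarrow> {ps!a, ps!b} \<noteq> {ps!0, c}" using psnV ab by (auto simp: doubleton_eq_iff)
    moreover have "\<And>c. c \<in> V \<Longrightarrow> {ps!a, ps!b} \<noteq> {ps!(l-1), c}" using psnV ab by (auto simp: doubleton_eq_iff)
    ultimately obtain i where i: "i+1<l" "{ps!a, ps!b} = {ps!i, ps!(i+1)}" unfolding Em using CV by blast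
    then have "(a = i \<and> b = i+1) \<or> (a = i+1 \<and> b = i)" using nth_inj ab
      by (auto simp: doubleton_eq_iff)
    then show "b = a+1" using ab by auto
  next
    assume "b = a+1" then show "{ps!a, ps!b}\<in>E'" unfolding Em using ab by blast
  qed
  have ePV: "{ps!t, z}\<in>E' \<longleftrightarrow> (t=0 \<and> z\<in>C) \<or> (t=l-1 \<and> z\<in>C')" if tz: "t<l" "z\<in>V" for t z
  proof
    assume "{ps!t, z}\<in>E'"
    moreover have "{ps!t, z} \<notin> E" using eV psnV tz by blast
    moreover have "\<And>i. i+1<l \<Longrightarrow> {ps!t, z} \<noteq> {ps!i, ps!(i+1)}" using psnV tz by (auto simp: doubleton_eq_iff)
    ultimately have "(\<exists>c\<in>C. {ps!t, z} = {ps!0, c}) \<or> (\<exists>c\<in>C'. {ps!t, z} = {ps!(l-1), c})" unfolding Em by blast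
    then show "(t=0 \<and> z\<in>C) \<or> (t=l-1 \<and> z\<in>C')"
      using psnV tz nth_inj CV l2' by (auto simp: doubleton_eq_iff)
  next
    assume "(t=0 \<and> z\<in>C) \<or> (t=l-1 \<and> z\<in>C')"
    then show "{ps!t, z}\<in>E'" unfolding Em by blast
  qed
  have nthin: "\<And>i. i<l \<Longrightarrow> ps!i \<in> set ps" using l_def by simp
  have esub': "\<forall>e\<in>E'. e \<subseteq> V \<union> set ps"
  proof
    fix e assume "e \<in> E'"
    then consider "e \<in> E" | i where "i+1<l" "e = {ps!i, ps!(i+1)}" | c where "c\<in>C" "e = {ps!0, c}"
      | c where "c\<in>C'" "e = {ps!(l-1), c}" unfolding Em by blast
    then show "e \<subseteq> V \<union> set ps"
    proof cases
      case 1 then show ?thesis using eV by blast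
    next
      case 2 then show ?thesis using nthin[of i] nthin[of "i+1"] by simp
    next
      case 3 then show ?thesis using nthin[of 0] l2' CV by auto
    next
      case 4 then show ?thesis using nthin[of "l-1"] l2' CV by auto
    qed
  qed
  have cVE': "conn E' V" using conn_mono[OF cV EE'] .
  have chain_ps: "conn E' ((\<lambda>t. ps!(s+t)) ` {..<m})" if "0<m" "s+m \<le> l" for s m
  proof (rule conn_chain)
    show "0<m" by fact
    fix t assume "Suc t < m"
    then show "{ps!(s+t), ps!(s+Suc t)} \<in> E'" using ePP[of "s+t" "s+Suc t"] that by simp
  qed
  have cps: "conn E' (set ps)" using chain_ps[of l 0] l2' setps by simp
  obtain c0 where c0: "c0 \<in> C" using CV by blast
  obtain c1 where c1: "c1 \<in> C'" using CV by blast
  have e0: "{c0, ps!0} \<in> E'" using ePV[of 0 c0] c0 CV l2' by (auto simp: insert_commute)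
  have e1: "{c1, ps!(l-1)} \<in> E'" using ePV[of "l-1" c1] c1 CV l2' by (auto simp: insert_commute)
  have c0V: "c0 \<in> V" "c1 \<in> V" using c0 c1 CV by auto
  have cV': "conn E' (V \<union> set ps)"
    by (rule conn_union_edge[OF cVE' cps c0V(1) _ e0]) (use l2' nthin in auto)
  have Ccomp: "\<And>u v. u\<in>C \<Longrightarrow> v\<in>C \<Longrightarrow> u\<noteq>v \<Longrightarrow> {u,v}\<in>E'"
  proof -
    fix u v assume "u\<in>C" "v\<in>C" "u\<noteq>v"
    moreover have "complete_set (V,E) C" using C unfolding clique_def by simp
    ultimately show "{u,v}\<in>E'" using EE' unfolding complete_set_def by auto
  qed
  have C'comp: "\<And>u v. u\<in>C' \<Longrightarrow> v\<in>C' \<Longrightarrow> u\<noteq>v \<Longrightarrow> {u,v}\<in>E'"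
  proof -
    fix u v assume "u\<in>C'" "v\<in>C'" "u\<noteq>v"
    moreover have "complete_set (V,E) C'" using C' unfolding clique_def by simp
    ultimately show "{u,v}\<in>E'" using EE' unfolding complete_set_def by auto
  qed
  have comp0: "complete_set (V \<union> set ps, E') (insert (ps!0) C)"
    unfolding complete_set_def
  proof (intro conjI ballI impI)
    show "insert (ps!0) C \<subseteq> fst (V \<union> set ps, E')" using CV nthin[of 0] l2' by auto
    fix u v assume u: "u \<in> insert (ps!0) C" and v: "v \<in> insert (ps!0) C" and uv: "u \<noteq> v"
    have a: "\<And>c. c \<in> C \<Longrightarrow> {ps!0, c} \<in> E'" using ePV[of 0] CV l2' by auto
    show "{u,v} \<in> snd (V \<union> set ps, E')"
      using u v uv a[of u] a[of v] Ccomp[of u v] by (auto simp: insert_commute)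
  qed
  have comp1: "complete_set (V \<union> set ps, E') (insert (ps!(l-1)) C')"
    unfolding complete_set_def
  proof (intro conjI ballI impI)
    show "insert (ps!(l-1)) C' \<subseteq> fst (V \<union> set ps, E')" using CV nthin[of "l-1"] l2' by auto
    fix u v assume u: "u \<in> insert (ps!(l-1)) C'" and v: "v \<in> insert (ps!(l-1)) C'" and uv: "u \<noteq> v"
    have a: "\<And>c. c \<in> C' \<Longrightarrow> {ps!(l-1), c} \<in> E'" using ePV[of "l-1"] CV l2' by auto
    show "{u,v} \<in> snd (V \<union> set ps, E')"
      using u v uv a[of u] a[of v] C'comp[of u v] by (auto simp: insert_commute)
  qed
  have pcomp: "complete_set (V \<union> set ps, E') {ps!i, ps!(i+1)}" if i: "i+1<l" for i
  proof -
    have "{ps!i, ps!(i+1)} \<in> E'" using ePP[of i "i+1"] i by simp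
    then show ?thesis using nthin[of i] nthin[of "i+1"] i unfolding complete_set_def
      by (auto simp: insert_commute)
  qed
  have cl: "conn E' ((V \<union> set ps) - K)" if K: "clique (V \<union> set ps, E') K" for K
  proof -
    have Kc: "complete_set (V \<union> set ps, E') K" and Km: "\<And>D. K \<subset> D \<Longrightarrow> \<not> complete_set (V \<union> set ps, E') D"
      using K unfolding clique_def by auto
    have KV': "K \<subseteq> V \<union> set ps" using Kc unfolding complete_set_def by simp
    have Kadj: "\<And>u v. u\<in>K \<Longrightarrow> v\<in>K \<Longrightarrow> u\<noteq>v \<Longrightarrow> {u,v}\<in>E'" using Kc unfolding complete_set_def by simp
    have inps: "\<And>x. x \<in> set ps \<Longrightarrow> \<exists>j<l. x = ps!j" using setps by auto
    show ?thesis
    proof (cases "K \<subseteq> V")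
      case True
      have KcV: "complete_set (V,E) K" unfolding complete_set_def
      proof (intro conjI ballI impI)
        show "K \<subseteq> fst (V,E)" using True by simp
        fix u v assume uv: "u\<in>K" "v\<in>K" "u\<noteq>v"
        then have "{u,v}\<in>E'" using Kadj by blast
        then show "{u,v} \<in> snd (V,E)" using eVV[of u v] uv True by auto
      qed
      have KclV: "clique (V,E) K"
        unfolding clique_def
      proof (intro conjI allI impI)
        show "complete_set (V,E) K" by fact
        fix D assume KD: "K \<subset> D"
        show "\<not> complete_set (V,E) D"
        proof
          assume "complete_set (V,E) D"
          then have "complete_set (V\<union>set ps, E') D" using EE' unfolding complete_set_def by auto
          then show False using Km KD by blast
        qed
      qed
      have cVK: "conn E' (V - K)" using conn_mono[OF cK[OF KclV] EE'] .
      have "\<not> C \<subseteq> K"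
      proof
        assume CK: "C \<subseteq> K"
        have "C = K"
        proof (rule ccontr)
          assume "C \<noteq> K" then have "C \<subset> K" using CK by auto
          then show False using C KcV unfolding clique_def by blast
        qed
        moreover have "ps!0 \<notin> K" using True psnV[of 0] l2' by auto
        ultimately have "K \<subset> insert (ps!0) C" by auto
        then show False using Km comp0 by blast
      qed
      then obtain c where c: "c\<in>C" "c\<notin>K" by blast
      have eq: "(V \<union> set ps) - K = (V - K) \<union> set ps" using True psV by auto
      have "{c, ps!0} \<in> E'" using ePV[of 0 c] c CV l2' by (auto simp: insert_commute)
      then show ?thesis unfolding eq using conn_union_edge[OF cVK cps] c nthin[of 0] l2' CV by auto
    next
      case False
      then obtain p where p: "p\<in>K" "p\<notin>V" by blast
      then obtain t where t: "t<l" "p = ps!t" using KV' inps by blast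
      show ?thesis
      proof (cases "\<exists>q\<in>K. q\<notin>V \<and> q\<noteq>p")
        case True
        then obtain q where q: "q\<in>K" "q\<notin>V" "q\<noteq>p" by blast
        then obtain s where s: "s<l" "q = ps!s" using KV' inps by blast
        have pq: "{p,q}\<in>E'" using Kadj p q by blast
        have "s = t+1 \<or> t = s+1"
        proof (cases "t < s")
          case True then show ?thesis using ePP[of t s] pq s t by simp
        next
          case False
          then have "s < t" using q t s by (metis linorder_neqE_nat)
          then show ?thesis using ePP[of s t] pq s t by (simp add: insert_commute)
        qed
        then obtain a where a: "a+1<l" "ps!a \<in> K" "ps!(a+1) \<in> K" using p q s t by metis
        have Keq: "K = {ps!a, ps!(a+1)}"
        proof (rule ccontr)
          assume "K \<noteq> {ps!a, ps!(a+1)}"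
          then obtain z where z: "z\<in>K" "z\<noteq>ps!a" "z\<noteq>ps!(a+1)" using a by blast
          have za: "{ps!a, z}\<in>E'" and zb: "{ps!(a+1), z}\<in>E'" using Kadj z a by auto
          show False
          proof (cases "z\<in>V")
            case True
            have "(a=0 \<and> z\<in>C) \<or> (a=l-1 \<and> z\<in>C')" using ePV[of a z] za True a by simp
            moreover have "(a+1=0 \<and> z\<in>C) \<or> (a+1=l-1 \<and> z\<in>C')" using ePV[of "a+1" z] zb True a by simp
            ultimately show False using disj a by auto
          next
            case False
            then obtain c where c: "c<l" "z = ps!c" using z KV' inps by blast
            have ca: "c \<noteq> a" "c \<noteq> a+1" using z c by auto
            have 1: "c < a \<Longrightarrow> a = c+1" using ePP[of c a] za c a by (simp add: insert_commute)
            have 2: "a < c \<Longrightarrow> c = a+1" using ePP[of a c] za c a by simp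
            have 3: "c < a+1 \<Longrightarrow> a+1 = c+1" using ePP[of c "a+1"] zb c a by (simp add: insert_commute)
            have 4: "a+1 < c \<Longrightarrow> c = a+2" using ePP[of "a+1" c] zb c a by simp
            show False using 1 2 3 4 ca by arith
          qed
        qed
        have eq: "(V \<union> set ps) - K = (V \<union> (\<lambda>t. ps!(0+t)) ` {..<a}) \<union> (\<lambda>t. ps!((a+2)+t)) ` {..<l-a-2}"
        proof
          show "(V \<union> set ps) - K \<subseteq> (V \<union> (\<lambda>t. ps!(0+t)) ` {..<a}) \<union> (\<lambda>t. ps!((a+2)+t)) ` {..<l-a-2}"
          proof
            fix x assume x: "x \<in> (V \<union> set ps) - K"
            show "x \<in> (V \<union> (\<lambda>t. ps!(0+t)) ` {..<a}) \<union> (\<lambda>t. ps!((a+2)+t)) ` {..<l-a-2}"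
            proof (cases "x \<in> V")
              case True then show ?thesis by simp
            next
              case False
              then obtain j where j: "j<l" "x = ps!j" using x inps by blast
              have "j \<noteq> a" "j \<noteq> a+1" using x j Keq by auto
              then have "j < a \<or> (j - (a+2) < l-a-2 \<and> j = (a+2) + (j-(a+2)))" using j by arith
              then show ?thesis
              proof
                assume "j<a"
                then have "x \<in> (\<lambda>t. ps!(0+t)) ` {..<a}" using j by (intro image_eqI[of _ _ j]) auto
                then show ?thesis by blast
              next
                assume h: "j - (a+2) < l-a-2 \<and> j = (a+2) + (j-(a+2))"
                have e: "x = (\<lambda>t. ps!((a+2)+t)) (j-(a+2))" using h j by metis
                have "j-(a+2) \<in> {..<l-a-2}" using h by simp
                then have "x \<in> (\<lambda>t. ps!((a+2)+t)) ` {..<l-a-2}" using e by (rule rev_image_eqI)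
                then show ?thesis by blast
              qed
            qed
          qed
        next
          show "(V \<union> (\<lambda>t. ps!(0+t)) ` {..<a}) \<union> (\<lambda>t. ps!((a+2)+t)) ` {..<l-a-2} \<subseteq> (V \<union> set ps) - K"
          proof
            fix x assume x: "x \<in> (V \<union> (\<lambda>t. ps!(0+t)) ` {..<a}) \<union> (\<lambda>t. ps!((a+2)+t)) ` {..<l-a-2}"
            then consider "x \<in> V" | j where "j<a" "x = ps!j" | j where "j<l-a-2" "x = ps!((a+2)+j)" by auto
            then show "x \<in> (V \<union> set ps) - K"
            proof cases
              case 1 then show ?thesis using Keq psnV a by auto
            next
              case 2 then show ?thesis using Keq nth_inj[of j a] nth_inj[of j "a+1"] nthin[of j] a by auto
            next
              case 3 then show ?thesis using Keq nth_inj[of "a+2+j" a] nth_inj[of "a+2+j" "a+1"] nthin[of "a+2+j"] a by auto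
            qed
          qed
        qed
        have c1: "conn E' (V \<union> (\<lambda>t. ps!(0+t)) ` {..<a})"
        proof (rule conn_union_opt[OF cVE'])
          assume ne: "(\<lambda>t. ps!(0+t)) ` {..<a} \<noteq> {}"
          then have "0 < a" by auto
          then show "conn E' ((\<lambda>t. ps!(0+t)) ` {..<a}) \<and> (\<exists>x\<in>V. \<exists>y\<in>(\<lambda>t. ps!(0+t)) ` {..<a}. {x,y}\<in>E')"
            using chain_ps[of a 0] a e0 c0V by force
        qed
        have c2: "conn E' ((V \<union> (\<lambda>t. ps!(0+t)) ` {..<a}) \<union> (\<lambda>t. ps!((a+2)+t)) ` {..<l-a-2})"
        proof (rule conn_union_opt[OF c1])
          assume ne: "(\<lambda>t. ps!((a+2)+t)) ` {..<l-a-2} \<noteq> {}"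
          then have lt: "0 < l-a-2" by auto
          have ix: "a+2+(l-a-3) = l-1" "l-a-3 \<in> {..<l-a-2}" using lt by auto
          have "ps!(l-1) = (\<lambda>t. ps!((a+2)+t)) (l-a-3)" using ix by simp
          then have "ps!(l-1) \<in> (\<lambda>t. ps!((a+2)+t)) ` {..<l-a-2}" using ix(2) by (rule rev_image_eqI[rotated])
          then show "conn E' ((\<lambda>t. ps!((a+2)+t)) ` {..<l-a-2}) \<and> (\<exists>x\<in>V \<union> (\<lambda>t. ps!(0+t)) ` {..<a}. \<exists>y\<in>(\<lambda>t. ps!((a+2)+t)) ` {..<l-a-2}. {x,y}\<in>E')"
            using chain_ps[of "l-a-2" "a+2"] lt a e1 c0V by force
        qed
        show ?thesis unfolding eq by (rule c2)
      next
        case False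
        then have Krest: "\<And>w. w\<in>K \<Longrightarrow> w\<noteq>p \<Longrightarrow> w\<in>V" by blast
        have "\<exists>z\<in>K. z\<noteq>p"
        proof (rule ccontr)
          assume "\<not> (\<exists>z\<in>K. z\<noteq>p)"
          then have Kp: "K = {p}" using p(1) by blast
          obtain i where i: "i+1<l" "p \<in> {ps!i, ps!(i+1)}"
          proof (cases "Suc t < l")
            case True
            have "p \<in> {ps!t, ps!(t+1)}" using t(2) by simp
            then show ?thesis using True by (intro that[of t]) simp_all
          next
            case False then have tt: "(t-1)+1 = t" "t-1+1 < l" using t l2' by auto
            have "p \<in> {ps!(t-1), ps!(t-1+1)}" unfolding tt(1) using t(2) by simp
            then show ?thesis by (rule that[OF tt(2)])
          qed
          have "ps!i \<noteq> ps!(i+1)" using nth_inj[of i "i+1"] i by simp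
          then have "K \<subseteq> {ps!i, ps!(i+1)} \<and> K \<noteq> {ps!i, ps!(i+1)}" using Kp i(2) by (auto simp: doubleton_eq_iff)
          then have "K \<subset> {ps!i, ps!(i+1)}" by (simp add: psubset_eq)
          from Km[OF this] pcomp[OF i(1)] show False by simp
        qed
        then obtain z where z: "z\<in>K" "z\<noteq>p" by blast
        have zV: "z\<in>V" using Krest z by blast
        have "{ps!t, z}\<in>E'" using Kadj p z t by blast
        then have tz: "(t=0 \<and> z\<in>C) \<or> (t=l-1 \<and> z\<in>C')" using ePV[of t z] t zV by simp
        show ?thesis
        proof (cases "t = 0")
          case True
          have "K \<subseteq> insert (ps!0) C"
          proof
            fix w assume w: "w \<in> K"
            show "w \<in> insert (ps!0) C"
            proof (cases "w = p")
              case True then show ?thesis using t \<open>t=0\<close> by simp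
            next
              case False
              then have wV: "w\<in>V" using Krest w by blast
              have "{ps!t, w}\<in>E'" using Kadj p w t False by blast
              then show ?thesis using ePV[of t w] t wV \<open>t=0\<close> l2' by auto
            qed
          qed
          then have Keq: "K = insert (ps!0) C" using Km[OF psubsetI] comp0 by metis
          have eq: "(V \<union> set ps) - K = (V - C) \<union> (\<lambda>t. ps!(1+t)) ` {..<l-1}"
          proof
            show "(V \<union> set ps) - K \<subseteq> (V - C) \<union> (\<lambda>t. ps!(1+t)) ` {..<l-1}"
            proof
              fix x assume x: "x \<in> (V \<union> set ps) - K"
              show "x \<in> (V - C) \<union> (\<lambda>t. ps!(1+t)) ` {..<l-1}"
              proof (cases "x \<in> V")
                case True then show ?thesis using x Keq by simp
              next
                case False
                then obtain j where j: "j<l" "x = ps!j" using x inps by blast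
                have "j \<noteq> 0" using x j Keq by auto
                then have "j-1 < l-1 \<and> j = 1 + (j-1)" using j by arith
                then have "x \<in> (\<lambda>t. ps!(1+t)) ` {..<l-1}" using j by (intro image_eqI[of _ _ "j-1"]) auto
                then show ?thesis by blast
              qed
            qed
          next
            show "(V - C) \<union> (\<lambda>t. ps!(1+t)) ` {..<l-1} \<subseteq> (V \<union> set ps) - K"
            proof
              fix x assume x: "x \<in> (V - C) \<union> (\<lambda>t. ps!(1+t)) ` {..<l-1}"
              then consider "x \<in> V - C" | j where "j<l-1" "x = ps!(1+j)" by auto
              then show "x \<in> (V \<union> set ps) - K"
              proof cases
                case 1 then show ?thesis using Keq psnV[of 0] l2' by auto
              next
                case 2
                then have jl: "1+j<l" "0<l" by auto
                have "ps!(1+j) \<noteq> ps!0" using nth_inj[OF jl] by simp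
                then show ?thesis using 2 Keq nthin[OF jl(1)] psnV[OF jl(1)] CV by auto
              qed
            qed
          qed
          have cVC: "conn E' (V - C)" using conn_mono[OF cK[OF C] EE'] .
          have c1C: "c1 \<in> V - C" using c1 c0V disj by auto
          have ix: "1+(l-2) = l-1" "l-2 \<in> {..<l-1}" using l2' by auto
          have "ps!(l-1) = (\<lambda>t. ps!(1+t)) (l-2)" using ix by simp
          then have "ps!(l-1) \<in> (\<lambda>t. ps!(1+t)) ` {..<l-1}" using ix(2) by (rule rev_image_eqI[rotated])
          moreover have "conn E' ((\<lambda>t. ps!(1+t)) ` {..<l-1})" using chain_ps[of "l-1" 1] l2' by simp
          ultimately show ?thesis unfolding eq using conn_union_edge[OF cVC _ c1C _ e1] by blast
        next
          case False
          then have tl: "t = l-1" using tz by simp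
          have "K \<subseteq> insert (ps!(l-1)) C'"
          proof
            fix w assume w: "w \<in> K"
            show "w \<in> insert (ps!(l-1)) C'"
            proof (cases "w = p")
              case True then show ?thesis using t tl by simp
            next
              case False
              then have wV: "w\<in>V" using Krest w by blast
              have "{ps!t, w}\<in>E'" using Kadj p w t False by blast
              then show ?thesis using ePV[of t w] t wV \<open>t\<noteq>0\<close> tl by auto
            qed
          qed
          then have Keq: "K = insert (ps!(l-1)) C'" using Km[OF psubsetI] comp1 by metis
          have eq: "(V \<union> set ps) - K = (V - C') \<union> (\<lambda>t. ps!(0+t)) ` {..<l-1}"
          proof
            show "(V \<union> set ps) - K \<subseteq> (V - C') \<union> (\<lambda>t. ps!(0+t)) ` {..<l-1}"
            proof
              fix x assume x: "x \<in> (V \<union> set ps) - K"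
              show "x \<in> (V - C') \<union> (\<lambda>t. ps!(0+t)) ` {..<l-1}"
              proof (cases "x \<in> V")
                case True then show ?thesis using x Keq by simp
              next
                case False
                then obtain j where j: "j<l" "x = ps!j" using x inps by blast
                have "j \<noteq> l-1" using x j Keq by auto
                then have "j < l-1" using j by arith
                then have "x \<in> (\<lambda>t. ps!(0+t)) ` {..<l-1}" using j by (intro image_eqI[of _ _ j]) auto
                then show ?thesis by blast
              qed
            qed
          next
            show "(V - C') \<union> (\<lambda>t. ps!(0+t)) ` {..<l-1} \<subseteq> (V \<union> set ps) - K"
            proof
              fix x assume x: "x \<in> (V - C') \<union> (\<lambda>t. ps!(0+t)) ` {..<l-1}"
              then consider "x \<in> V - C'" | j where "j<l-1" "x = ps!(0+j)" by auto
              then show "x \<in> (V \<union> set ps) - K"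
              proof cases
                case 1 then show ?thesis using Keq psnV[of "l-1"] l2' by auto
              next
                case 2
                then have jl: "j<l" "l-1<l" "j \<noteq> l-1" using l2' by auto
                have "ps!j \<noteq> ps!(l-1)" using nth_inj[OF jl(1,2)] jl(3) by simp
                then show ?thesis using 2 Keq nthin[OF jl(1)] psnV[OF jl(1)] CV by auto
              qed
            qed
          qed
          have cVC: "conn E' (V - C')" using conn_mono[OF cK[OF C'] EE'] .
          have c0C: "c0 \<in> V - C'" using c0 c0V disj by auto
          have "ps!0 \<in> (\<lambda>t. ps!(0+t)) ` {..<l-1}"
            using l2' by (intro image_eqI[of _ _ 0]) auto
          moreover have "conn E' ((\<lambda>t. ps!(0+t)) ` {..<l-1})" using chain_ps[of "l-1" 0] l2' by simp
          ultimately show ?thesis unfolding eq using conn_union_edge[OF cVC _ c0C _ e0] by blast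
        qed
      qed
    qed
  qed
  show ?thesis unfolding ginv_def using cV' esub' cl by blast
qed


lemma gate_inv: "gate H \<Longrightarrow> ginv (fst H) (snd H)"
proof (induction H rule: gate.induct)
  case (cycle xs E)
  then show ?case using cycle_inv[of xs E] by simp
next
  case (extend V E C C' ps E')
  then show ?case using ext_inv[of V E C C' ps E'] by simp
qed

lemma gate_atom: assumes g: "gate H" shows "atom H"
proof -
  obtain V E where H: "H = (V,E)" by (cases H)
  have gi: "ginv V E" using gate_inv[OF g] H by simp
  have eV: "\<forall>e\<in>E. e \<subseteq> V" using gi unfolding ginv_def by simp
  have EE: "{e\<in>E. e\<subseteq>V} = E" using eV by auto
  have "conn E V" using gi unfolding ginv_def by simp
  then have c: "connected_graph (V,E)" unfolding conn_def EE .
  have "\<not> clique_separator (V,E) K" for K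
  proof
    assume cs: "clique_separator (V,E) K"
    then have "clique (V,E) K" unfolding clique_separator_def by simp
    then have "conn E (V - K)" using gi unfolding ginv_def by simp
    then have "connected_graph (induced (V,E) (V - K))" unfolding conn_def induced_def by simp
    then show False using cs unfolding clique_separator_def disconnected_graph_def by simp
  qed
  then show ?thesis using c H unfolding atom_def by blast
qed

theorem lemma12:
  fixes G H :: "'a graph" and k :: nat
  assumes "graph G" and "k_gate k H" and "induced_subgraph H G"
  shows "\<exists>A. atom_of G A \<and> induced_subgraph H (induced G A)"
proof -
  have g: "gate H" using assms(2) unfolding k_gate_def by simp
  have fin: "finite (fst G)" using assms(1) unfolding graph_def by simp
  have HG: "fst H \<subseteq> fst G" "snd H = {e \<in> snd G. e \<subseteq> fst H}" using assms(3) unfolding induced_subgraph_def by auto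
  have iH: "induced G (fst H) = H" using HG(2) unfolding induced_def by (cases H) simp
  define S where "S = {B. fst H \<subseteq> B \<and> B \<subseteq> fst G \<and> atom (induced G B)}"
  have finS: "finite S" unfolding S_def using fin by (rule finite_subset[rotated, OF finite_Pow_iff[THEN iffD2]]) auto
  have "fst H \<in> S" unfolding S_def using HG(1) iH gate_atom[OF g] by simp
  then obtain A where A: "A \<in> S" "\<forall>b\<in>S. A \<subseteq> b \<longrightarrow> A = b"
    using finite_has_maximal[OF finS] by blast
  have "atom_of G A" unfolding atom_of_def
  proof (intro conjI allI impI)
    show "A \<subseteq> fst G" "atom (induced G A)" using A(1) unfolding S_def by auto
    fix B assume B: "A \<subset> B \<and> B \<subseteq> fst G"
    show "\<not> atom (induced G B)"
    proof
      assume "atom (induced G B)"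
      then have "B \<in> S" using A(1) B unfolding S_def by auto
      then show False using A(2) B by blast
    qed
  qed
  moreover have "induced_subgraph H (induced G A)"
    using A(1) HG unfolding S_def induced_subgraph_def induced_def by auto
  ultimately show ?thesis by blast
qed

end
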